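(* The following are equivalent. (i) For every $0<\delta\leq 1$ there exists a positive integer $N=\mathrm{DPHJ}(2,2,\delta)$ such that for every $n\geq N$, every subset $A\subseteq W(n,2,2)$ with $|A|\geq\delta\,2^{n^2}$ contains a polynomial combinatorial line of $W(n,2,2)$. (ii) $\lim_{n\to\infty}\Delta^\circ_n(\mathcal{C}^\circ)=0$; that is, every $\mathcal{C}^\circ$-HJ-code $\mathcal{G}\subseteq\mathbb{F}_2^{\binom{[n]}{\leq 2}}$ satisfies $\mathbb{P}[\mathcal{G}]=o_{n\to\infty}(1)$.
   Context: Polynomial words: $W(n,2,2)$ is the set of all maps $w\colon[n]^2\to\{1,2\}$ (it has $2^{n^2}$ elements). A polynomial variable word is a map $v\colon[n]^2\to\{1,2\}\cup\{x\}$ ($x$ a new symbol) such that $v^{-1}(\{x\})=X\times X$ for some nonempty $X\subseteq[n]$; $v(a)$ is obtained by replacing each occurrence of $x$ by $a$. A polynomial combinatorial line is a set $\{v(1),v(2)\}$ for a polynomial variable word $v$. Graphs: $\binom{V}{\leq 2}$ is the set of nonempty subsets of $V$ of size at most 2; a graph on $V$ is a subset of $\binom{V}{\leq 2}$. $V(G)$ is the union of the members of $G$; graphs $G,H$ are isomorphic if there is a bijection $\phi\colon V(G)\to V(H)$ with $\{x,y\}\in G\iff\{\phi(x),\phi(y)\}\in H$ for all $x,y\in V(G)$. Graphs on $[n]$ are identified with elements of $\mathbb{F}_2^{\binom{[n]}{\leq 2}}$; $G_1+G_2$ is symmetric difference; $\mathbb{P}$ is the uniform probability measure. $K_r^\circ=\binom{[r]}{\leq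 2}$, $\mathcal{C}^\circ=\{K_r^\circ:r\geq 1\}$. $\mathcal{G}$ is a $\mathcal{C}^\circ$-HJ-code if for all $G_1,G_2\in\mathcal{G}$ with $G_1\supseteq G_2$, $G_1+G_2$ is not isomorphic to any member of $\mathcal{C}^\circ$. $\Delta^\circ_n(\mathcal{C}^\circ)$ is the maximum of $\mathbb{P}[\mathcal{G}]$ over $\mathcal{C}^\circ$-HJ-codes $\mathcal{G}\subseteq\mathbb{F}_2^{\binom{[n]}{\leq 2}}$. *)

theory Defs
  imports "HOL-Analysis.Analysis"
begin

definition grid :: "nat \<Rightarrow> (nat \<times> nat) set" where
  "grid n = {1..n} \<times> {1..n}"

definition W22 :: "nat \<Rightarrow> ((nat \<times> nat) \<Rightarrow> nat) set" where
  "W22 n = PiE (grid n) (\<lambda>_. {1, 2})"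

text \<open>Polynomial variable word: values Some 1, Some 2, or None (the variable x);
  the set of positions carrying x is X \<times> X for a nonempty X \<subseteq> [n].\<close>
definition poly_var_word :: "nat \<Rightarrow> ((nat \<times> nat) \<Rightarrow> nat option) \<Rightarrow> bool" where
  "poly_var_word n v \<longleftrightarrow>
     v \<in> PiE (grid n) (\<lambda>_. {Some 1, Some 2, None}) \<and>
     (\<exists>X. X \<noteq> {} \<and> X \<subseteq> {1..n} \<and> {p \<in> grid n. v p = None} = X \<times> X)"

definition subst_word :: "nat \<Rightarrow> ((nat \<times> nat) \<Rightarrow> nat option) \<Rightarrow> nat \<Rightarrow> ((nat \<times> nat) \<Rightarrow> nat)" where
  "subst_word n v a = restrict (\<lambda>p. case v p of None \<Rightarrow> a | Some b \<Rightarrow> b) (grid n)"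

definition contains_poly_line :: "nat \<Rightarrow> ((nat \<times> nat) \<Rightarrow> nat) set \<Rightarrow> bool" where
  "contains_poly_line n A \<longleftrightarrow>
     (\<exists>v. poly_var_word n v \<and> subst_word n v 1 \<in> A \<and> subst_word n v 2 \<in> A)"

definition binom_le2 :: "'a set \<Rightarrow> 'a set set" where
  "binom_le2 V = {S. S \<subseteq> V \<and> S \<noteq> {} \<and> card S \<le> 2}"

definition vertices :: "'a set set \<Rightarrow> 'a set" where
  "vertices G = \<Union> G"

definition graph_iso :: "'a set set \<Rightarrow> 'b set set \<Rightarrow> bool" where
  "graph_iso G H \<longleftrightarrow> (\<exists>\<phi>. bij_betw \<phi> (vertices G) (vertices H) \<and>
     (\<forall>x\<in>vertices G. \<forall>y\<in>vertices G. {x, y} \<in> G \<longleftrightarrow> {\<phi> x, \<phi> y} \<in> H))"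

definition Kloop :: "nat \<Rightarrow> nat set set" where
  "Kloop r = binom_le2 {1..r}"

text \<open>Symmetric difference G1 + G2 in F_2^{binom([n],\<le>2)}.\<close>
definition gsum :: "'a set set \<Rightarrow> 'a set set \<Rightarrow> 'a set set" where
  "gsum G1 G2 = (G1 - G2) \<union> (G2 - G1)"

definition HJ_code :: "nat set set set \<Rightarrow> bool" where
  "HJ_code \<G> \<longleftrightarrow> (\<forall>G1\<in>\<G>. \<forall>G2\<in>\<G>. G2 \<subseteq> G1 \<longrightarrow>
      \<not> (\<exists>r\<ge>1. graph_iso (gsum G1 G2) (Kloop r)))"

definition graphs_on :: "nat \<Rightarrow> nat set set set" where
  "graphs_on n = Pow (binom_le2 {1..n})"

definition Pgraph :: "nat \<Rightarrow> nat set set set \<Rightarrow> real" where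
  "Pgraph n \<G> = real (card \<G>) / real (card (graphs_on n))"

definition Delta_circ :: "nat \<Rightarrow> real" where
  "Delta_circ n = Max {Pgraph n \<G> | \<G>. \<G> \<subseteq> graphs_on n \<and> HJ_code \<G>}"

end

theory Submission
  imports Defs
begin


definition mrg :: "'p set \<Rightarrow> ('p \<Rightarrow> 'v) \<Rightarrow> ('p \<Rightarrow> 'v) \<Rightarrow> 'p \<Rightarrow> 'v" where
  "mrg D a b = (\<lambda>p. if p \<in> D then a p else b p)"

lemma mrg_PiE:
  assumes "a \<in> PiE (I \<inter> D) F" "b \<in> PiE (I - D) F"
  shows "mrg D a b \<in> PiE I F"
  using assms unfolding mrg_def PiE_def Pi_def extensional_def by auto

lemma restrict_mrg1:
  assumes "a \<in> PiE (I \<inter> D) F"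
  shows "restrict (mrg D a b) (I \<inter> D) = a"
  using assms unfolding mrg_def PiE_def extensional_def restrict_def by (auto simp: fun_eq_iff)

lemma restrict_mrg2:
  assumes "b \<in> PiE (I - D) F"
  shows "restrict (mrg D a b) (I - D) = b"
  using assms unfolding mrg_def PiE_def extensional_def restrict_def by (auto simp: fun_eq_iff)

lemma mrg_restrict:
  assumes "w \<in> PiE I F"
  shows "mrg D (restrict w (I \<inter> D)) (restrict w (I - D)) = w"
  using assms unfolding mrg_def PiE_def extensional_def restrict_def by (auto simp: fun_eq_iff)

lemma sum_if_const:
  assumes "finite X"
  shows "(\<Sum>b\<in>X. if Q b then c else 0) = of_nat (card {b\<in>X. Q b}) * (c::'c::comm_semiring_1)"
  using assms by (simp flip: sum.inter_filter)

lemma card_fibers: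
  assumes fin: "finite I" "\<And>i. i \<in> I \<Longrightarrow> finite (F i)" and A: "A \<subseteq> PiE I F"
  shows "card A = (\<Sum>b\<in>PiE (I - D) F. card {a \<in> PiE (I \<inter> D) F. mrg D a b \<in> A})"
proof -
  let ?S = "SIGMA b:PiE (I - D) F. {a \<in> PiE (I \<inter> D) F. mrg D a b \<in> A}"
  have "bij_betw (\<lambda>(b,a). mrg D a b) ?S A"
  proof (rule bij_betw_byWitness[where f' = "\<lambda>w. (restrict w (I - D), restrict w (I \<inter> D))"])
    show "\<forall>x\<in>?S. (restrict ((\<lambda>(b,a). mrg D a b) x) (I - D), restrict ((\<lambda>(b,a). mrg D a b) x) (I \<inter> D)) = x"
    proof
      fix x assume "x \<in> ?S"
      then obtain b a where x: "x = (b,a)" "b \<in> PiE (I - D) F" "a \<in> PiE (I \<inter> D) F" by auto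
      show "(restrict ((\<lambda>(b,a). mrg D a b) x) (I - D), restrict ((\<lambda>(b,a). mrg D a b) x) (I \<inter> D)) = x"
        unfolding x(1) using restrict_mrg1[OF x(3)] restrict_mrg2[OF x(2)] by simp
    qed
    show "\<forall>y\<in>A. (\<lambda>(b,a). mrg D a b) (restrict y (I - D), restrict y (I \<inter> D)) = y"
    proof
      fix y assume "y \<in> A"
      hence "y \<in> PiE I F" using A by auto
      thus "(\<lambda>(b,a). mrg D a b) (restrict y (I - D), restrict y (I \<inter> D)) = y"
        using mrg_restrict by simp
    qed
    show "(\<lambda>(b,a). mrg D a b) ` ?S \<subseteq> A" by auto
    show "(\<lambda>w. (restrict w (I - D), restrict w (I \<inter> D))) ` A \<subseteq> ?S"
    proof
      fix z assume "z \<in> (\<lambda>w. (restrict w (I - D), restrict w (I \<inter> D))) ` A"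
      then obtain y where y: "y \<in> A" "z = (restrict y (I - D), restrict y (I \<inter> D))" by auto
      hence yP: "y \<in> PiE I F" using A by auto
      have r1: "restrict y (I - D) \<in> PiE (I - D) F" "restrict y (I \<inter> D) \<in> PiE (I \<inter> D) F"
        using yP by (auto simp: restrict_PiE_iff PiE_mem)
      have "mrg D (restrict y (I \<inter> D)) (restrict y (I - D)) \<in> A" using mrg_restrict[OF yP] y(1) by simp
      thus "z \<in> ?S" using r1 y(2) by simp
    qed
  qed
  hence "card A = card ?S" by (simp add: bij_betw_same_card)
  also have "\<dots> = (\<Sum>b\<in>PiE (I - D) F. card {a \<in> PiE (I \<inter> D) F. mrg D a b \<in> A})"
  proof (rule card_SigmaI)
    have fP: "finite (PiE (I \<inter> D) F)" "finite (PiE (I - D) F)"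
      using fin by (auto intro!: finite_PiE)
    show "finite (PiE (I - D) F)" by (rule fP(2))
    show "\<forall>b\<in>PiE (I - D) F. finite {a \<in> PiE (I \<inter> D) F. mrg D a b \<in> A}"
      using fP(1) by auto
  qed
  finally show ?thesis .
qed

lemma card_prod_split:
  assumes fin: "finite I" "\<And>i. i \<in> I \<Longrightarrow> finite (F i)"
  shows "card {w \<in> PiE I F. P (restrict w (I \<inter> D)) \<and> Q (restrict w (I - D))}
       = card {a \<in> PiE (I \<inter> D) F. P a} * card {b \<in> PiE (I - D) F. Q b}"
proof -
  let ?A = "{w \<in> PiE I F. P (restrict w (I \<inter> D)) \<and> Q (restrict w (I - D))}"
  have "card ?A = (\<Sum>b\<in>PiE (I - D) F. card {a \<in> PiE (I \<inter> D) F. mrg D a b \<in> ?A})"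
    by (rule card_fibers[OF fin]) auto
  also have "\<dots> = (\<Sum>b\<in>PiE (I - D) F. if Q b then card {a \<in> PiE (I \<inter> D) F. P a} else 0)"
  proof (rule sum.cong)
    fix b assume b: "b \<in> PiE (I - D) F"
    have "{a \<in> PiE (I \<inter> D) F. mrg D a b \<in> ?A} = (if Q b then {a \<in> PiE (I \<inter> D) F. P a} else {})"
      using b mrg_PiE[OF _ b] restrict_mrg1[of _ I D F b] restrict_mrg2[OF b] by auto
    thus "card {a \<in> PiE (I \<inter> D) F. mrg D a b \<in> ?A} = (if Q b then card {a \<in> PiE (I \<inter> D) F. P a} else 0)"
      by simp
  qed simp
  also have "\<dots> = card {a \<in> PiE (I \<inter> D) F. P a} * card {b \<in> PiE (I - D) F. Q b}"
    using fin by (subst sum_if_const) (auto intro!: finite_PiE)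
  finally show ?thesis .
qed

lemma card_fiber_bound:
  assumes fin: "finite I" "\<And>i. i \<in> I \<Longrightarrow> finite (F i)"
    and A: "A \<subseteq> {w \<in> PiE I F. P (restrict w (I \<inter> D)) \<and> Q (restrict w (I - D))}"
    and d: "\<And>b::'a \<Rightarrow> 'b. b \<in> PiE (I - D) F \<Longrightarrow> Q b \<Longrightarrow>
        real (card {a \<in> PiE (I \<inter> D) F. P a \<and> mrg D a b \<in> A}) \<le> (d::real) * card {a \<in> PiE (I \<inter> D) F. P a}"
  shows "real (card A) \<le> (d::real) * card {w \<in> PiE I F. P (restrict w (I \<inter> D)) \<and> Q (restrict w (I - D))}"
proof -
  have A': "A \<subseteq> PiE I F" using A by auto
  have "real (card A) = (\<Sum>b\<in>PiE (I - D) F. real (card {a \<in> PiE (I \<inter> D) F. mrg D a b \<in> A}))"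
    using card_fibers[OF fin A', of D] by simp
  also have "\<dots> \<le> (\<Sum>b\<in>PiE (I - D) F. if Q b then d * card {a \<in> PiE (I \<inter> D) F. P a} else 0)"
  proof (rule sum_mono)
    fix b assume b: "b \<in> PiE (I - D) F"
    have eq: "{a \<in> PiE (I \<inter> D) F. mrg D a b \<in> A} = (if Q b then {a \<in> PiE (I \<inter> D) F. P a \<and> mrg D a b \<in> A} else {})"
      using b A by (auto simp: restrict_mrg1 restrict_mrg2)
    show "real (card {a \<in> PiE (I \<inter> D) F. mrg D a b \<in> A}) \<le> (if Q b then d * card {a \<in> PiE (I \<inter> D) F. P a} else 0)"
      using d[OF b] by (subst eq) auto
  qed
  also have "\<dots> = d * (card {a \<in> PiE (I \<inter> D) F. P a} * card {b \<in> PiE (I - D) F. Q b})"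
    using fin by (subst sum_if_const) (auto intro!: finite_PiE)
  also have "\<dots> = d * card {w \<in> PiE I F. P (restrict w (I \<inter> D)) \<and> Q (restrict w (I - D))}"
    using card_prod_split[OF fin, where P=P and D=D and Q=Q] by simp
  finally show ?thesis .
qed



lemma binom_char:
  assumes "finite V"
  shows "S \<in> binom_le2 V \<longleftrightarrow> (\<exists>x\<in>V. \<exists>y\<in>V. S = {x,y})"
proof
  assume S: "S \<in> binom_le2 V"
  hence fS: "finite S" using assms unfolding binom_le2_def by (auto intro: finite_subset)
  from S have "S \<noteq> {}" "card S \<le> 2" "S \<subseteq> V" unfolding binom_le2_def by auto
  then have "card S = 1 \<or> card S = 2" using fS by (metis One_nat_def card_0_eq le_Suc_eq nat_le_linear numeral_2_eq_2 le_zero_eq)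
  then show "\<exists>x\<in>V. \<exists>y\<in>V. S = {x,y}"
    using \<open>S \<subseteq> V\<close> by (auto simp: card_1_singleton_iff card_2_iff)
next
  assume "\<exists>x\<in>V. \<exists>y\<in>V. S = {x,y}"
  then obtain x y where "x \<in> V" "y \<in> V" "S = {x,y}" by blast
  moreover have "card {x,y} \<le> 2" by (simp add: card_insert_le_m1)
  ultimately show "S \<in> binom_le2 V" unfolding binom_le2_def by auto
qed

lemma binom_finite_el: "finite V \<Longrightarrow> S \<in> binom_le2 V \<Longrightarrow> finite S"
  unfolding binom_le2_def by (auto intro: finite_subset)

lemma MinMax_pair: "{Min {x,y}, Max {x,y}} = {x, (y::nat)}"
  by (cases "x \<le> y") (auto simp: min_def max_def)

lemma Min_pair: "Min {x, y::nat} = min x y" by (simp)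
lemma Max_pair: "Max {x, y::nat} = max x y" by (simp)

lemma vertices_binom: assumes "finite X" shows "vertices (binom_le2 X) = X"
proof -
  have "{x} \<in> binom_le2 X" if "x \<in> X" for x
    using that assms binom_char[OF assms, of "{x}"] by blast
  moreover have "S \<subseteq> X" if "S \<in> binom_le2 X" for S using that unfolding binom_le2_def by auto
  ultimately show ?thesis unfolding vertices_def by blast
qed

lemma vertices_Kloop: "vertices (Kloop r) = {1..r}"
  unfolding Kloop_def by (rule vertices_binom) simp

lemma iso_Kloop_D:
  assumes U: "finite U" and G: "G \<subseteq> binom_le2 U" and iso: "graph_iso G (Kloop r)" and r: "r \<ge> 1"
  shows "\<exists>X. X \<noteq> {} \<and> X \<subseteq> U \<and> G = binom_le2 X"
proof -
  obtain \<phi> where bij: "bij_betw \<phi> (vertices G) {1..r}"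
    and e: "\<forall>x\<in>vertices G. \<forall>y\<in>vertices G. {x, y} \<in> G \<longleftrightarrow> {\<phi> x, \<phi> y} \<in> Kloop r"
    using iso unfolding graph_iso_def vertices_Kloop by blast
  let ?X = "vertices G"
  have XU: "?X \<subseteq> U" using G unfolding vertices_def binom_le2_def by auto
  have fX: "finite ?X" using XU U finite_subset by blast
  have ne: "?X \<noteq> {}" using bij r unfolding bij_betw_def by auto
  have all: "{x,y} \<in> G" if "x \<in> ?X" "y \<in> ?X" for x y
  proof -
    have "\<phi> x \<in> {1..r}" "\<phi> y \<in> {1..r}" using bij that unfolding bij_betw_def by auto
    hence "{\<phi> x, \<phi> y} \<in> Kloop r" unfolding Kloop_def binom_char[OF finite_atLeastAtMost] by blast
    thus ?thesis using e that by blast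
  qed
  have eq: "G = binom_le2 ?X"
  proof
    show "G \<subseteq> binom_le2 ?X"
    proof
      fix S assume "S \<in> G"
      hence "S \<in> binom_le2 U" using G by auto
      then obtain x y where "S = {x,y}" using U by (auto simp: binom_char)
      moreover have "x \<in> ?X" "y \<in> ?X" using \<open>S \<in> G\<close> \<open>S = {x,y}\<close> unfolding vertices_def by auto
      ultimately show "S \<in> binom_le2 ?X" using binom_char[OF fX] by blast
    qed
    show "binom_le2 ?X \<subseteq> G" using all fX by (auto simp: binom_char)
  qed
  show ?thesis using ne XU eq by (intro exI[of _ ?X] conjI)
qed

lemma iso_Kloop_I:
  assumes "finite X" "X \<noteq> {}"
  shows "graph_iso (binom_le2 X) (Kloop (card X)) \<and> card X \<ge> 1"
proof -
  obtain h where h: "bij_betw h X {1..card X}"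
    using finite_same_card_bij[OF assms(1), of "{1..card X}"] by auto
  have "graph_iso (binom_le2 X) (Kloop (card X))"
    unfolding graph_iso_def vertices_Kloop vertices_binom[OF assms(1)]
  proof (intro exI conjI ballI)
    show "bij_betw h X {1..card X}" by (rule h)
    fix x y assume "x \<in> X" "y \<in> X"
    moreover hence "h x \<in> {1..card X}" "h y \<in> {1..card X}" using h unfolding bij_betw_def by auto
    ultimately show "({x, y} \<in> binom_le2 X) = ({h x, h y} \<in> Kloop (card X))"
      unfolding Kloop_def binom_char[OF finite_atLeastAtMost] binom_char[OF assms(1)] by blast
  qed
  moreover have "card X \<ge> 1" using assms by (simp add: Suc_le_eq card_gt_0_iff)
  ultimately show ?thesis by blast
qed

lemma HJ_codeI:
  assumes "\<G> \<subseteq> graphs_on m"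
    and "\<And>G1 G2 X. G1 \<in> \<G> \<Longrightarrow> G2 \<in> \<G> \<Longrightarrow> G2 \<subseteq> G1 \<Longrightarrow> X \<noteq> {} \<Longrightarrow> X \<subseteq> {1..m}
           \<Longrightarrow> G1 - G2 = binom_le2 X \<Longrightarrow> False"
  shows "HJ_code \<G>"
  unfolding HJ_code_def
proof (intro ballI impI notI)
  fix G1 G2 assume G: "G1 \<in> \<G>" "G2 \<in> \<G>" "G2 \<subseteq> G1" and "\<exists>r\<ge>1. graph_iso (gsum G1 G2) (Kloop r)"
  then obtain r where r: "r \<ge> 1" "graph_iso (G1 - G2) (Kloop r)"
    unfolding gsum_def by (auto simp: Un_absorb2 Diff_eq_empty_iff[THEN iffD2])
  have "G1 - G2 \<subseteq> binom_le2 {1..m}" using G assms(1) unfolding graphs_on_def by auto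
  from iso_Kloop_D[OF _ this r(2) r(1)] obtain X where X: "X \<noteq> {}" "X \<subseteq> {1..m}" "G1 - G2 = binom_le2 X" by auto
  show False by (rule assms(2)[OF G X])
qed

lemma poly_line_props:
  assumes v: "poly_var_word n v"
  obtains X where "X \<noteq> {}" "X \<subseteq> {1..n}"
    "subst_word n v 1 \<in> W22 n" "subst_word n v 2 \<in> W22 n"
    "\<And>p. p \<in> X \<times> X \<Longrightarrow> subst_word n v 1 p = 1 \<and> subst_word n v 2 p = 2"
    "\<And>p. p \<notin> X \<times> X \<Longrightarrow> subst_word n v 1 p = subst_word n v 2 p"
proof -
  from v obtain X where X: "X \<noteq> {}" "X \<subseteq> {1..n}" "{p \<in> grid n. v p = None} = X \<times> X"
    and vP: "v \<in> PiE (grid n) (\<lambda>_. {Some 1, Some 2, None})"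
    unfolding poly_var_word_def by blast
  have XX: "X \<times> X \<subseteq> grid n" using X unfolding grid_def by auto
  have vN: "v p = None" if "p \<in> X \<times> X" for p
  proof -
    have "p \<in> {p \<in> grid n. v p = None}" using X(3) that by simp
    thus ?thesis by simp
  qed
  show ?thesis
  proof (rule that[OF X(1,2)])
    have vv: "v p \<in> {Some 1, Some 2, None}" if "p \<in> grid n" for p using vP that by (rule PiE_mem)
    have "subst_word n v a \<in> W22 n" if "a \<in> {1,2}" for a
      unfolding W22_def subst_word_def restrict_PiE_iff
    proof
      fix p assume "p \<in> grid n"
      from vv[OF this] show "(case v p of None \<Rightarrow> a | Some b \<Rightarrow> b) \<in> {1, 2}" using that by auto
    qed
    thus "subst_word n v 1 \<in> W22 n" "subst_word n v 2 \<in> W22 n" by auto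
    show "subst_word n v 1 p = 1 \<and> subst_word n v 2 p = 2" if "p \<in> X \<times> X" for p
      using that vN XX unfolding subst_word_def by auto
    show "subst_word n v 1 p = subst_word n v 2 p" if "p \<notin> X \<times> X" for p
    proof (cases "p \<in> grid n")
      case True
      have "v p \<noteq> None"
      proof
        assume "v p = None"
        hence "p \<in> {p \<in> grid n. v p = None}" using True by simp
        thus False using that X(3) by simp
      qed
      then obtain b where "v p = Some b" by auto
      thus ?thesis unfolding subst_word_def using True by simp
    qed (simp add: subst_word_def)
  qed
qed



definition Dup :: "nat \<Rightarrow> (nat \<times> nat) set" where "Dup n = {(i,j) \<in> grid n. i \<le> j}"
definition gr :: "nat \<Rightarrow> ((nat \<times> nat) \<Rightarrow> nat) \<Rightarrow> nat set set" where
  "gr n w = {S \<in> binom_le2 {1..n}. w (Min S, Max S) = 1}"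

lemma MinMax_in:
  assumes "S \<in> binom_le2 {1..n}"
  shows "(Min S, Max S) \<in> Dup n" "{Min S, Max S} = S" "Min S \<in> S" "Max S \<in> S"
proof -
  obtain x y where xy: "x \<in> {1..n}" "y \<in> {1..n}" "S = {x,y}" using assms binom_char[of "{1..n}" S] by auto
  show "(Min S, Max S) \<in> Dup n" "{Min S, Max S} = S" "Min S \<in> S" "Max S \<in> S"
    using xy unfolding Dup_def grid_def by (auto simp: min_def max_def)
qed

lemma grid_Dup: "grid n \<inter> Dup n = Dup n" unfolding Dup_def by auto

lemma gr_restrict: "gr n (restrict w (grid n \<inter> Dup n)) = gr n w"
  unfolding gr_def using MinMax_in(1) grid_Dup by auto

lemma gr_graphs: "gr n w \<in> graphs_on n"
  unfolding gr_def graphs_on_def by auto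

lemma gr_pair:
  assumes "(i,j) \<in> Dup n"
  shows "{i,j} \<in> gr n w \<longleftrightarrow> w (i,j) = 1"
proof -
  have "i \<in> {1..n}" "j \<in> {1..n}" "i \<le> j" using assms unfolding Dup_def grid_def by auto
  hence "{i,j} \<in> binom_le2 {1..n}"
    using binom_char[of "{1..n}" "{i,j}"] by blast
  moreover have "Min {i,j} = i" "Max {i,j} = j" using \<open>i \<le> j\<close> by (auto simp: min_def max_def)
  ultimately show ?thesis unfolding gr_def by auto
qed

lemma gr_bij: "bij_betw (gr n) (PiE (grid n \<inter> Dup n) (\<lambda>_. {1,2::nat})) (graphs_on n)"
  unfolding bij_betw_def
proof (intro conjI)
  show "inj_on (gr n) (PiE (grid n \<inter> Dup n) (\<lambda>_. {1,2::nat}))"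
  proof (rule inj_onI)
    fix a1 a2 assume a: "a1 \<in> PiE (grid n \<inter> Dup n) (\<lambda>_. {1,2::nat})" "a2 \<in> PiE (grid n \<inter> Dup n) (\<lambda>_. {1,2::nat})"
      and eq: "gr n a1 = gr n a2"
    show "a1 = a2"
    proof (rule PiE_ext[OF a])
      fix p assume p: "p \<in> grid n \<inter> Dup n"
      obtain i j where ij: "p = (i,j)" by force
      have v: "a1 p \<in> {1,2}" "a2 p \<in> {1,2}" using a p by (blast intro: PiE_mem)+
      have "(i,j) \<in> Dup n" using p ij grid_Dup by auto
      hence "a1 p = 1 \<longleftrightarrow> a2 p = 1" using gr_pair[of i j n a1] gr_pair[of i j n a2] eq ij by simp
      thus "a1 p = a2 p" using v by auto
    qed
  qed
  show "gr n ` PiE (grid n \<inter> Dup n) (\<lambda>_. {1,2::nat}) = graphs_on n"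
  proof
    show "gr n ` PiE (grid n \<inter> Dup n) (\<lambda>_. {1,2::nat}) \<subseteq> graphs_on n" using gr_graphs by auto
    show "graphs_on n \<subseteq> gr n ` PiE (grid n \<inter> Dup n) (\<lambda>_. {1,2::nat})"
    proof
      fix G assume G: "G \<in> graphs_on n"
      define a where "a = restrict (\<lambda>(i,j). if {i,j} \<in> G then 1 else (2::nat)) (grid n \<inter> Dup n)"
      have aP: "a \<in> PiE (grid n \<inter> Dup n) (\<lambda>_. {1,2::nat})" unfolding a_def restrict_PiE_iff by (simp add: split_beta)
      have aS: "a (Min S, Max S) = (if S \<in> G then 1 else 2)" if S: "S \<in> binom_le2 {1..n}" for S
      proof -
        have "(Min S, Max S) \<in> grid n \<inter> Dup n" using MinMax_in(1)[OF S] grid_Dup by simp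
        hence "a (Min S, Max S) = (if {Min S, Max S} \<in> G then 1 else 2)" unfolding a_def by simp
        thus ?thesis using MinMax_in(2)[OF S] by simp
      qed
      have "gr n a = G"
      proof
        show "gr n a \<subseteq> G"
        proof
          fix S assume "S \<in> gr n a"
          hence S: "S \<in> binom_le2 {1..n}" "a (Min S, Max S) = 1" unfolding gr_def by auto
          have "(if S \<in> G then 1 else 2::nat) = 1" using aS[OF S(1)] S(2) by simp
          thus "S \<in> G" by (cases "S \<in> G") simp_all
        qed
        show "G \<subseteq> gr n a"
        proof
          fix S assume "S \<in> G"
          hence S: "S \<in> binom_le2 {1..n}" using G unfolding graphs_on_def by auto
          thus "S \<in> gr n a" using aS[OF S] \<open>S \<in> G\<close> unfolding gr_def by auto
        qed
      qed
      thus "G \<in> gr n ` PiE (grid n \<inter> Dup n) (\<lambda>_. {1,2::nat})" using aP by blast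
    qed
  qed
qed

lemma card_pre:
  assumes "\<G> \<subseteq> graphs_on n"
  shows "card {a \<in> PiE (grid n \<inter> Dup n) (\<lambda>_. {1,2::nat}). gr n a \<in> \<G>} = card \<G>"
proof -
  let ?P = "PiE (grid n \<inter> Dup n) (\<lambda>_. {1,2::nat})"
  have b: "bij_betw (gr n) ?P (graphs_on n)" by (rule gr_bij)
  have "inj_on (gr n) {a \<in> ?P. gr n a \<in> \<G>}" using b unfolding bij_betw_def by (auto intro: inj_on_subset)
  moreover have "gr n ` {a \<in> ?P. gr n a \<in> \<G>} = \<G>"
  proof
    show "gr n ` {a \<in> ?P. gr n a \<in> \<G>} \<subseteq> \<G>" by auto
    show "\<G> \<subseteq> gr n ` {a \<in> ?P. gr n a \<in> \<G>}"
    proof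
      fix G assume "G \<in> \<G>"
      hence "G \<in> gr n ` ?P" using b assms unfolding bij_betw_def by auto
      then obtain a where "a \<in> ?P" "G = gr n a" by auto
      thus "G \<in> gr n ` {a \<in> ?P. gr n a \<in> \<G>}" using \<open>G \<in> \<G>\<close> by auto
    qed
  qed
  ultimately show ?thesis using card_image[of "gr n" "{a \<in> ?P. gr n a \<in> \<G>}"] by simp
qed

lemma finite_grid: "finite (grid n)" unfolding grid_def by auto

lemma card_A:
  assumes "\<G> \<subseteq> graphs_on n"
  shows "card {w \<in> W22 n. gr n w \<in> \<G>} = card \<G> * card (PiE (grid n - Dup n) (\<lambda>_. {1,2::nat}))"
proof -
  have "{w \<in> W22 n. gr n w \<in> \<G>} = {w \<in> PiE (grid n) (\<lambda>_. {1,2::nat}).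
          (\<lambda>a. gr n a \<in> \<G>) (restrict w (grid n \<inter> Dup n)) \<and> (\<lambda>b. True) (restrict w (grid n - Dup n))}"
    unfolding W22_def gr_restrict by simp
  also have "card \<dots> = card {a \<in> PiE (grid n \<inter> Dup n) (\<lambda>_. {1,2::nat}). gr n a \<in> \<G>}
       * card {b \<in> PiE (grid n - Dup n) (\<lambda>_. {1,2::nat}). True}"
    by (rule card_prod_split) (auto simp: finite_grid)
  finally show ?thesis using card_pre[OF assms] by simp
qed

lemma card_W22: "card (W22 n) = 2 ^ (n ^ 2)"
proof -
  have "card (grid n) = n * n" unfolding grid_def by (simp add: card_cartesian_product)
  thus ?thesis unfolding W22_def by (simp add: card_PiE finite_grid power2_eq_square numeral_2_eq_2)
qed

lemma card_A_P:
  assumes "\<G> \<subseteq> graphs_on n"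
  shows "real (card {w \<in> W22 n. gr n w \<in> \<G>}) = Pgraph n \<G> * 2 ^ (n ^ 2)"
proof -
  let ?c = "card (PiE (grid n - Dup n) (\<lambda>_. {1,2::nat}))"
  have "{w \<in> W22 n. gr n w \<in> graphs_on n} = W22 n" using gr_graphs by auto
  hence tot: "2 ^ (n ^ 2) = card (graphs_on n) * ?c" using card_A[of "graphs_on n" n] card_W22 by simp
  have "finite (graphs_on n)" "{} \<in> graphs_on n" unfolding graphs_on_def binom_le2_def by auto
  hence "card (graphs_on n) > 0" by (auto simp: card_gt_0_iff)
  have tot': "(2::real) ^ (n ^ 2) = real (card (graphs_on n)) * real ?c"
    using arg_cong[OF tot, of real] by simp
  have "real (card {w \<in> W22 n. gr n w \<in> \<G>}) = real (card \<G>) * real ?c"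
    using card_A[OF assms] by simp
  also have "\<dots> = real (card \<G>) / real (card (graphs_on n)) * (real (card (graphs_on n)) * real ?c)"
    using \<open>card (graphs_on n) > 0\<close> by (simp add: field_simps)
  finally show ?thesis unfolding Pgraph_def tot' .
qed

lemma line_not_code:
  assumes G: "\<G> \<subseteq> graphs_on n" and code: "HJ_code \<G>"
  shows "\<not> contains_poly_line n {w \<in> W22 n. gr n w \<in> \<G>}"
proof
  assume "contains_poly_line n {w \<in> W22 n. gr n w \<in> \<G>}"
  then obtain v where v: "poly_var_word n v" and in1: "subst_word n v 1 \<in> {w \<in> W22 n. gr n w \<in> \<G>}"
    and in2: "subst_word n v 2 \<in> {w \<in> W22 n. gr n w \<in> \<G>}"
    unfolding contains_poly_line_def by blast
  obtain X where X: "X \<noteq> {}" "X \<subseteq> {1..n}"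
    and inX: "\<And>p. p \<in> X \<times> X \<Longrightarrow> subst_word n v 1 p = 1 \<and> subst_word n v 2 p = 2"
    and outX: "\<And>p. p \<notin> X \<times> X \<Longrightarrow> subst_word n v 1 p = subst_word n v 2 p"
    using poly_line_props[OF v] by metis
  define w1 where "w1 = subst_word n v 1"
  define w2 where "w2 = subst_word n v 2"
  have fX: "finite X" using X(2) finite_subset by blast
  have sub: "gr n w2 \<subseteq> gr n w1"
  proof
    fix S assume "S \<in> gr n w2"
    hence S: "S \<in> binom_le2 {1..n}" "w2 (Min S, Max S) = 1" unfolding gr_def by auto
    have "(Min S, Max S) \<notin> X \<times> X" using inX S(2) unfolding w2_def by force
    thus "S \<in> gr n w1" using outX S unfolding gr_def w1_def w2_def by auto
  qed
  have diff: "gr n w1 - gr n w2 = binom_le2 X"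
  proof
    show "gr n w1 - gr n w2 \<subseteq> binom_le2 X"
    proof
      fix S assume "S \<in> gr n w1 - gr n w2"
      hence S: "S \<in> binom_le2 {1..n}" "w1 (Min S, Max S) = 1" "w2 (Min S, Max S) \<noteq> 1" unfolding gr_def by auto
      have "(Min S, Max S) \<in> X \<times> X"
      proof (rule ccontr)
        assume "(Min S, Max S) \<notin> X \<times> X"
        hence "w1 (Min S, Max S) = w2 (Min S, Max S)" using outX unfolding w1_def w2_def by blast
        thus False using S(2,3) by simp
      qed
      hence "Min S \<in> X" "Max S \<in> X" by auto
      thus "S \<in> binom_le2 X" using MinMax_in(2)[OF S(1)] binom_char[OF fX, of S] by blast
    qed
    show "binom_le2 X \<subseteq> gr n w1 - gr n w2"
    proof
      fix S assume S: "S \<in> binom_le2 X"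
      then obtain x y where xy: "x \<in> X" "y \<in> X" "S = {x,y}" using binom_char[OF fX] by blast
      hence Sn: "S \<in> binom_le2 {1..n}" using X(2) binom_char[of "{1..n}" S] by blast
      have "Min S \<in> X" "Max S \<in> X" using MinMax_in(3,4)[OF Sn] xy by auto
      hence "w1 (Min S, Max S) = 1" "w2 (Min S, Max S) = 2" using inX unfolding w1_def w2_def by auto
      thus "S \<in> gr n w1 - gr n w2" using Sn unfolding gr_def by auto
    qed
  qed
  have "gsum (gr n w1) (gr n w2) = binom_le2 X" using sub diff unfolding gsum_def by auto
  moreover have "graph_iso (binom_le2 X) (Kloop (card X))" "card X \<ge> 1" using iso_Kloop_I[OF fX X(1)] by auto
  moreover have "gr n w1 \<in> \<G>" "gr n w2 \<in> \<G>" using in1 in2 unfolding w1_def w2_def by auto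
  ultimately show False using code sub unfolding HJ_code_def by metis
qed

lemma Delta_facts:
  shows "\<exists>\<G>. \<G> \<subseteq> graphs_on n \<and> HJ_code \<G> \<and> Delta_circ n = Pgraph n \<G>"
    and "\<And>\<G>. \<G> \<subseteq> graphs_on n \<Longrightarrow> HJ_code \<G> \<Longrightarrow> Pgraph n \<G> \<le> Delta_circ n"
    and "Delta_circ n \<ge> 0"
proof -
  let ?S = "{Pgraph n \<G> | \<G>. \<G> \<subseteq> graphs_on n \<and> HJ_code \<G>}"
  have fin: "finite (graphs_on n)" unfolding graphs_on_def binom_le2_def by auto
  have "?S = Pgraph n ` {\<G>. \<G> \<subseteq> graphs_on n \<and> HJ_code \<G>}" by auto
  hence finS: "finite ?S" using fin by simp
  have "HJ_code {}" unfolding HJ_code_def by auto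
  hence neS: "Pgraph n {} \<in> ?S" by auto
  hence "?S \<noteq> {}" by auto
  hence "Delta_circ n \<in> ?S" unfolding Delta_circ_def using finS Max_in by blast
  thus "\<exists>\<G>. \<G> \<subseteq> graphs_on n \<and> HJ_code \<G> \<and> Delta_circ n = Pgraph n \<G>" by auto
  show le: "\<And>\<G>. \<G> \<subseteq> graphs_on n \<Longrightarrow> HJ_code \<G> \<Longrightarrow> Pgraph n \<G> \<le> Delta_circ n"
    unfolding Delta_circ_def using finS by (intro Max_ge) auto
  have "Pgraph n {} = 0" unfolding Pgraph_def by simp
  thus "Delta_circ n \<ge> 0" using le[of "{}"] \<open>HJ_code {}\<close> by auto
qed

lemma dir1:
  assumes H: "\<forall>\<delta>::real. 0 < \<delta> \<and> \<delta> \<le> 1 \<longrightarrow>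
            (\<exists>N::nat. N > 0 \<and> (\<forall>n\<ge>N. \<forall>A. A \<subseteq> W22 n \<and> real (card A) \<ge> \<delta> * 2 ^ (n ^ 2)
                 \<longrightarrow> contains_poly_line n A))"
  shows "Delta_circ \<longlonglongrightarrow> 0"
proof (rule LIMSEQ_I)
  fix r :: real assume r: "r > 0"
  define \<delta> where "\<delta> = min r 1"
  have "0 < \<delta> \<and> \<delta> \<le> 1" using r unfolding \<delta>_def by auto
  then obtain N where N: "\<forall>n\<ge>N. \<forall>A. A \<subseteq> W22 n \<and> real (card A) \<ge> \<delta> * 2 ^ (n ^ 2)
                 \<longrightarrow> contains_poly_line n A" using H by blast
  show "\<exists>no. \<forall>n\<ge>no. norm (Delta_circ n - 0) < r"
  proof (intro exI allI impI)
    fix n assume n: "n \<ge> N"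
    obtain \<G> where G: "\<G> \<subseteq> graphs_on n" "HJ_code \<G>" "Delta_circ n = Pgraph n \<G>" using Delta_facts(1) by blast
    have "Pgraph n \<G> < \<delta>"
    proof (rule ccontr)
      assume "\<not> Pgraph n \<G> < \<delta>"
      hence "real (card {w \<in> W22 n. gr n w \<in> \<G>}) \<ge> \<delta> * 2 ^ (n ^ 2)"
        using card_A_P[OF G(1)] by (simp add: mult_right_mono)
      hence "contains_poly_line n {w \<in> W22 n. gr n w \<in> \<G>}" using N n by auto
      thus False using line_not_code[OF G(1,2)] by simp
    qed
    thus "norm (Delta_circ n - 0) < r" using G(3) Delta_facts(3)[of n] unfolding \<delta>_def by auto
  qed
qed



definition blk :: "nat \<Rightarrow> nat \<Rightarrow> nat set" where "blk m k = {k*m+1..k*m+m}"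
definition Db :: "nat \<Rightarrow> nat \<Rightarrow> (nat \<times> nat) set" where "Db m k = blk m k \<times> blk m k"
definition symk :: "nat \<Rightarrow> nat \<Rightarrow> ((nat \<times> nat) \<Rightarrow> nat) \<Rightarrow> bool" where
  "symk m k w \<longleftrightarrow> (\<forall>i\<in>blk m k. \<forall>j\<in>blk m k. w (i,j) = w (j,i))"
definition grk :: "nat \<Rightarrow> nat \<Rightarrow> ((nat \<times> nat) \<Rightarrow> nat) \<Rightarrow> nat set set" where
  "grk m k a = {S \<in> binom_le2 {1..m}. a (Min S + k*m, Max S + k*m) = 1}"

lemma blk_sub: "Suc k * m \<le> n \<Longrightarrow> blk m k \<subseteq> {1..n}"
  unfolding blk_def by auto

lemma Db_sub: "Suc k * m \<le> n \<Longrightarrow> Db m k \<subseteq> grid n"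
  unfolding Db_def grid_def using blk_sub by blast

lemma blk_disj: "l < k \<Longrightarrow> blk m l \<inter> blk m k = {}"
proof -
  assume "l < k"
  hence "l * m + m \<le> k * m" by (metis add_mult_distrib mult_1 mult_le_mono1 Suc_leI plus_1_eq_Suc add.commute)
  thus ?thesis unfolding blk_def by auto
qed

lemma blk_shift: "x \<in> {1..m} \<Longrightarrow> x + k*m \<in> blk m k"
  unfolding blk_def by auto

lemma blk_unshift: "i \<in> blk m k \<Longrightarrow> i - k*m \<in> {1..m} \<and> i = (i - k*m) + k*m"
  unfolding blk_def by auto

lemma symk_cong:
  assumes "\<And>i j. i \<in> blk m k \<Longrightarrow> j \<in> blk m k \<Longrightarrow> w1 (i,j) = w2 (i,j)"
  shows "symk m k w1 = symk m k w2"
  unfolding symk_def using assms by metis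

lemma symk_restrict_in:
  assumes "Db m k \<subseteq> I"
  shows "symk m k (restrict w (I \<inter> Db m k)) = symk m k w"
  by (rule symk_cong) (use assms in \<open>auto simp: Db_def\<close>)

lemma symk_restrict_out:
  assumes "l < k" "Db m l \<subseteq> I"
  shows "symk m l (restrict w (I - Db m k)) = symk m l w"
proof -
  have "Db m l \<inter> Db m k = {}" using blk_disj[OF assms(1)] unfolding Db_def by auto
  thus ?thesis using assms(2) by (intro symk_cong) (auto simp: Db_def)
qed

lemma grk_pair:
  assumes sym: "symk m k a" and ij: "i \<in> {1..m}" "j \<in> {1..m}"
  shows "{i,j} \<in> grk m k a \<longleftrightarrow> a (i + k*m, j + k*m) = 1"
proof -
  have b: "{i,j} \<in> binom_le2 {1..m}" using ij binom_char[of "{1..m}" "{i,j}"] by blast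
  show ?thesis
  proof (cases "i \<le> j")
    case True
    hence "Min {i,j} = i" "Max {i,j} = j" by (auto simp: min_def max_def)
    thus ?thesis using b unfolding grk_def by simp
  next
    case False
    hence "Min {i,j} = j" "Max {i,j} = i" by (auto simp: min_def max_def)
    moreover have "a (j + k*m, i + k*m) = a (i + k*m, j + k*m)"
      using sym blk_shift[OF ij(1)] blk_shift[OF ij(2)] unfolding symk_def by blast
    ultimately show ?thesis using b unfolding grk_def by simp
  qed
qed

lemma grk_graphs: "grk m k a \<in> graphs_on m"
  unfolding grk_def graphs_on_def by auto

lemma Db_cases:
  assumes "p \<in> Db m k"
  obtains x y where "x \<in> {1..m}" "y \<in> {1..m}" "p = (x + k*m, y + k*m)"
proof -
  obtain i j where p: "p = (i,j)" "i \<in> blk m k" "j \<in> blk m k" using assms unfolding Db_def by auto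
  show ?thesis using that[of "i - k*m" "j - k*m"] blk_unshift[OF p(2)] blk_unshift[OF p(3)] p(1) by auto
qed

lemma grk_bij:
  assumes D: "Db m k \<subseteq> I"
  shows "bij_betw (grk m k) {a \<in> PiE (I \<inter> Db m k) (\<lambda>_. {1,2::nat}). symk m k a} (graphs_on m)"
  unfolding bij_betw_def
proof (intro conjI)
  let ?S = "{a \<in> PiE (I \<inter> Db m k) (\<lambda>_. {1,2::nat}). symk m k a}"
  show "inj_on (grk m k) ?S"
  proof (rule inj_onI)
    fix a1 a2 assume a1: "a1 \<in> ?S" and a2: "a2 \<in> ?S" and eq: "grk m k a1 = grk m k a2"
    have aP: "a1 \<in> PiE (I \<inter> Db m k) (\<lambda>_. {1,2::nat})" "a2 \<in> PiE (I \<inter> Db m k) (\<lambda>_. {1,2::nat})"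
      using a1 a2 by auto
    show "a1 = a2"
    proof (rule PiE_ext[OF aP])
      fix p assume p: "p \<in> I \<inter> Db m k"
      then obtain x y where xy: "x \<in> {1..m}" "y \<in> {1..m}" "p = (x + k*m, y + k*m)"
        using Db_cases by blast
      have v: "a1 p \<in> {1,2}" "a2 p \<in> {1,2}" using aP p by (blast intro: PiE_mem)+
      have "a1 p = 1 \<longleftrightarrow> a2 p = 1"
        using grk_pair[of m k a1 x y] grk_pair[of m k a2 x y] a1 a2 xy eq by simp
      thus "a1 p = a2 p" using v by auto
    qed
  qed
  show "grk m k ` ?S = graphs_on m"
  proof
    show "grk m k ` ?S \<subseteq> graphs_on m" using grk_graphs by blast
    show "graphs_on m \<subseteq> grk m k ` ?S"
    proof
      fix G assume G: "G \<in> graphs_on m"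
      define a where "a = restrict (\<lambda>(i,j). if {i - k*m, j - k*m} \<in> G then 1 else (2::nat)) (I \<inter> Db m k)"
      have aP: "a \<in> PiE (I \<inter> Db m k) (\<lambda>_. {1,2::nat})" unfolding a_def restrict_PiE_iff by (simp add: split_beta)
      have as: "symk m k a"
        unfolding symk_def
      proof (intro ballI)
        fix i j assume ij: "i \<in> blk m k" "j \<in> blk m k"
        hence "(i,j) \<in> I \<inter> Db m k" "(j,i) \<in> I \<inter> Db m k" using D unfolding Db_def by auto
        moreover have "{i - k*m, j - k*m} = {j - k*m, i - k*m}" by (rule insert_commute)
        ultimately show "a (i,j) = a (j,i)" unfolding a_def by simp
      qed
      have aS: "a (Min S + k*m, Max S + k*m) = (if S \<in> G then 1 else 2)" if S: "S \<in> binom_le2 {1..m}" for S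
      proof -
        have mm: "Min S \<in> {1..m}" "Max S \<in> {1..m}" "{Min S, Max S} = S"
          using MinMax_in[OF S] unfolding Dup_def grid_def by auto
        hence "(Min S + k*m, Max S + k*m) \<in> I \<inter> Db m k" using D blk_shift unfolding Db_def by blast
        hence "a (Min S + k*m, Max S + k*m) = (if {Min S, Max S} \<in> G then 1 else 2)" unfolding a_def by simp
        thus ?thesis using mm(3) by simp
      qed
      have "grk m k a = G"
      proof
        show "grk m k a \<subseteq> G"
        proof
          fix S assume "S \<in> grk m k a"
          hence S: "S \<in> binom_le2 {1..m}" "a (Min S + k*m, Max S + k*m) = 1" unfolding grk_def by auto
          have "(if S \<in> G then 1 else 2::nat) = 1" using aS[OF S(1)] S(2) by simp
          thus "S \<in> G" by (cases "S \<in> G") simp_all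
        qed
        show "G \<subseteq> grk m k a"
        proof
          fix S assume "S \<in> G"
          hence S: "S \<in> binom_le2 {1..m}" using G unfolding graphs_on_def by auto
          thus "S \<in> grk m k a" using aS[OF S] \<open>S \<in> G\<close> unfolding grk_def by simp
        qed
      qed
      thus "G \<in> grk m k ` ?S" using aP as by blast
    qed
  qed
qed



definition Nk :: "nat \<Rightarrow> nat \<Rightarrow> nat \<Rightarrow> ((nat \<times> nat) \<Rightarrow> nat) set" where
  "Nk n m k = {w \<in> W22 n. \<forall>l<k. \<not> symk m l w}"
definition Tk :: "nat \<Rightarrow> nat \<Rightarrow> nat \<Rightarrow> ((nat \<times> nat) \<Rightarrow> nat) set" where
  "Tk n m k = {w \<in> W22 n. (\<forall>l<k. \<not> symk m l w) \<and> symk m k w}"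

lemma Db_sub_le: "Suc k * m \<le> n \<Longrightarrow> l \<le> k \<Longrightarrow> Db m l \<subseteq> grid n"
  by (rule Db_sub) (meson Suc_le_mono le_trans mult_le_mono1)

lemma Q_restrict:
  assumes "Suc k * m \<le> n"
  shows "(\<forall>l<k. \<not> symk m l (restrict w (grid n - Db m k))) = (\<forall>l<k. \<not> symk m l w)"
  using symk_restrict_out[OF _ Db_sub_le[OF assms]] by (meson less_imp_le)

lemma Nk_split:
  assumes "Suc k * m \<le> n"
  shows "Nk n m k = {w \<in> PiE (grid n) (\<lambda>_. {1,2::nat}). (\<lambda>a. True) (restrict w (grid n \<inter> Db m k))
          \<and> (\<lambda>b. \<forall>l<k. \<not> symk m l b) (restrict w (grid n - Db m k))}"
  unfolding Nk_def W22_def using Q_restrict[OF assms] by simp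

lemma Tk_split:
  assumes "Suc k * m \<le> n"
  shows "Tk n m k = {w \<in> PiE (grid n) (\<lambda>_. {1,2::nat}). (symk m k) (restrict w (grid n \<inter> Db m k))
          \<and> (\<lambda>b. \<forall>l<k. \<not> symk m l b) (restrict w (grid n - Db m k))}"
  unfolding Tk_def W22_def using Q_restrict[OF assms] symk_restrict_in[OF Db_sub[OF assms]] by auto

lemma card_blk: "card (blk m k) = m" unfolding blk_def by simp

lemma card_Tk_Nk:
  assumes k: "Suc k * m \<le> n"
  shows "real (card (Nk n m k)) \<le> 2 ^ (m*m) * real (card (Tk n m k))"
proof -
  let ?I = "grid n" and ?D = "Db m k" and ?F = "\<lambda>_::nat\<times>nat. {1,2::nat}"
  let ?Q = "\<lambda>b. \<forall>l<k. \<not> symk m l b"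
  have fin: "finite ?I" "\<And>i. i \<in> ?I \<Longrightarrow> finite (?F i)" by (auto simp: finite_grid)
  have cN: "card (Nk n m k) = card {a \<in> PiE (?I \<inter> ?D) ?F. True} * card {b \<in> PiE (?I - ?D) ?F. ?Q b}"
    unfolding Nk_split[OF k] by (rule card_prod_split[OF fin])
  have cT: "card (Tk n m k) = card {a \<in> PiE (?I \<inter> ?D) ?F. symk m k a} * card {b \<in> PiE (?I - ?D) ?F. ?Q b}"
    unfolding Tk_split[OF k] by (rule card_prod_split[OF fin])
  have ID: "?I \<inter> ?D = ?D" using Db_sub[OF k] by auto
  have "card (PiE (?I \<inter> ?D) ?F) = 2 ^ (m*m)"
    unfolding ID by (simp add: card_PiE Db_def card_cartesian_product card_blk numeral_2_eq_2 finite_cartesian_product blk_def)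
  hence c1: "card {a \<in> PiE (?I \<inter> ?D) ?F. True} = 2 ^ (m*m)" by simp
  have mem: "restrict (\<lambda>_. 1) (?I \<inter> ?D) \<in> {a \<in> PiE (?I \<inter> ?D) ?F. symk m k a}"
    unfolding ID using Db_sub[OF k] unfolding symk_def Db_def by auto
  moreover have "finite (PiE (?I \<inter> ?D) ?F)" using fin by (auto intro!: finite_PiE)
  hence finS: "finite {a \<in> PiE (?I \<inter> ?D) ?F. symk m k a}" by simp
  have c2: "card {a \<in> PiE (?I \<inter> ?D) ?F. symk m k a} \<ge> 1"
  proof -
    have "card {a \<in> PiE (?I \<inter> ?D) ?F. symk m k a} > 0"
      by (subst card_gt_0_iff) (use mem finS in blast)
    thus ?thesis by simp
  qed
  have "card (Nk n m k) \<le> 2 ^ (m*m) * card (Tk n m k)"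
    unfolding cN cT c1 using c2 by simp
  hence "real (card (Nk n m k)) \<le> real (2 ^ (m*m) * card (Tk n m k))" by (simp only: of_nat_le_iff)
  thus ?thesis by simp
qed

lemma Nk_Suc: "Nk n m (Suc k) = Nk n m k - Tk n m k" and Tk_sub: "Tk n m k \<subseteq> Nk n m k"
  unfolding Nk_def Tk_def by (auto simp: less_Suc_eq)

lemma finite_W22: "finite (W22 n)" unfolding W22_def by (auto intro!: finite_PiE simp: finite_grid)

lemma block_line:
  assumes k: "Suc k * m \<le> n"
    and a1: "a1 \<in> PiE (grid n \<inter> Db m k) (\<lambda>_. {1,2::nat})" "symk m k a1"
    and a2: "a2 \<in> PiE (grid n \<inter> Db m k) (\<lambda>_. {1,2::nat})" "symk m k a2"
    and b: "b \<in> PiE (grid n - Db m k) (\<lambda>_. {1,2::nat})"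
    and sub: "grk m k a2 \<subseteq> grk m k a1"
    and X: "X \<noteq> {}" "X \<subseteq> {1..m}" "grk m k a1 - grk m k a2 = binom_le2 X"
  shows "\<exists>v. poly_var_word n v \<and> subst_word n v 1 = mrg (Db m k) a1 b \<and> subst_word n v 2 = mrg (Db m k) a2 b"
proof -
  let ?I = "grid n" and ?D = "Db m k" and ?F = "\<lambda>_::nat\<times>nat. {1,2::nat}"
  define w1 where "w1 = mrg ?D a1 b"
  define w2 where "w2 = mrg ?D a2 b"
  have w1P: "w1 \<in> PiE ?I ?F" unfolding w1_def by (rule mrg_PiE[OF a1(1) b])
  have w2P: "w2 \<in> PiE ?I ?F" unfolding w2_def by (rule mrg_PiE[OF a2(1) b])
  have fX: "finite X" using X(2) finite_subset by blast
  define X' where "X' = (\<lambda>x. x + k*m) ` X"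
  have X'b: "X' \<subseteq> blk m k" unfolding X'_def using X(2) blk_shift by blast
  have DI: "?D \<subseteq> ?I" by (rule Db_sub[OF k])
  have XXD: "X' \<times> X' \<subseteq> ?D" using X'b unfolding Db_def by auto
  have XXI: "X' \<times> X' \<subseteq> ?I" using XXD DI by auto
  define v where "v = restrict (\<lambda>p. if p \<in> X' \<times> X' then None else Some (w1 p)) ?I"
  have vP: "v \<in> PiE ?I (\<lambda>_. {Some 1, Some 2, None})"
    unfolding v_def restrict_PiE_iff
  proof
    fix p assume "p \<in> ?I"
    hence "w1 p \<in> {1,2}" using w1P by (blast intro: PiE_mem)
    thus "(if p \<in> X' \<times> X' then None else Some (w1 p)) \<in> {Some 1, Some 2, None}" by auto
  qed
  have vN: "{p \<in> ?I. v p = None} = X' \<times> X'" unfolding v_def using XXI by auto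
  have X'ne: "X' \<noteq> {}" unfolding X'_def using X(1) by simp
  have X'n: "X' \<subseteq> {1..n}" using X'b blk_sub[OF k] by blast
  have pv: "poly_var_word n v" unfolding poly_var_word_def using vP vN X'ne X'n by blast
  have inX: "a1 p = 1 \<and> a2 p = 2" if p: "p \<in> X' \<times> X'" for p
  proof -
    obtain x y where xy: "x \<in> X" "y \<in> X" "p = (x + k*m, y + k*m)" using p unfolding X'_def by auto
    have xy': "x \<in> {1..m}" "y \<in> {1..m}" using xy X(2) by auto
    have "{x,y} \<in> binom_le2 X" using xy binom_char[OF fX, of "{x,y}"] by blast
    hence "{x,y} \<in> grk m k a1" "{x,y} \<notin> grk m k a2" using X(3) by auto
    hence "a1 p = 1" "a2 p \<noteq> 1" using grk_pair[OF a1(2) xy'] grk_pair[OF a2(2) xy'] xy(3) by auto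
    moreover have "a2 p \<in> {1,2}" using a2(1) p XXD DI by (blast intro: PiE_mem)
    ultimately show ?thesis by auto
  qed
  have outX: "w1 p = w2 p" if p: "p \<notin> X' \<times> X'" for p
  proof (cases "p \<in> ?D")
    case False
    thus ?thesis unfolding w1_def w2_def mrg_def by simp
  next
    case True
    then obtain x y where xy: "x \<in> {1..m}" "y \<in> {1..m}" "p = (x + k*m, y + k*m)" using Db_cases by blast
    have "\<not> (x \<in> X \<and> y \<in> X)" using p xy(3) unfolding X'_def by auto
    hence "{x,y} \<notin> binom_le2 X" unfolding binom_le2_def by auto
    hence "{x,y} \<in> grk m k a1 \<longleftrightarrow> {x,y} \<in> grk m k a2" using X(3) sub by blast
    hence "a1 p = 1 \<longleftrightarrow> a2 p = 1" using grk_pair[OF a1(2) xy(1,2)] grk_pair[OF a2(2) xy(1,2)] xy(3) by simp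
    moreover have "a1 p \<in> {1,2}" "a2 p \<in> {1,2}" using a1(1) a2(1) True DI by (blast intro: PiE_mem)+
    ultimately have "a1 p = a2 p" by auto
    thus ?thesis unfolding w1_def w2_def mrg_def using True by simp
  qed
  have s1: "subst_word n v 1 = w1"
  proof
    fix p show "subst_word n v 1 p = w1 p"
    proof (cases "p \<in> ?I")
      case True
      show ?thesis
      proof (cases "p \<in> X' \<times> X'")
        case True
        have pD: "p \<in> ?D" using XXD True by blast
        have "w1 p = a1 p" unfolding w1_def mrg_def using pD by simp
        hence wv: "w1 p = 1" using inX[OF True] by simp
        have "v p = None" unfolding v_def using True \<open>p \<in> ?I\<close> by simp
        thus ?thesis using \<open>p \<in> ?I\<close> wv unfolding subst_word_def by simp
      next
        case False
        have "v p = Some (w1 p)" unfolding v_def using False \<open>p \<in> ?I\<close> by simp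
        thus ?thesis using \<open>p \<in> ?I\<close> unfolding subst_word_def by simp
      qed
    next
      case False
      have "w1 p = undefined" by (rule PiE_arb[OF w1P False])
      thus ?thesis unfolding subst_word_def using False by simp
    qed
  qed
  have s2: "subst_word n v 2 = w2"
  proof
    fix p show "subst_word n v 2 p = w2 p"
    proof (cases "p \<in> ?I")
      case True
      show ?thesis
      proof (cases "p \<in> X' \<times> X'")
        case True
        have pD: "p \<in> ?D" using XXD True by blast
        have "w2 p = a2 p" unfolding w2_def mrg_def using pD by simp
        hence wv: "w2 p = 2" using inX[OF True] by simp
        have "v p = None" unfolding v_def using True \<open>p \<in> ?I\<close> by simp
        thus ?thesis using \<open>p \<in> ?I\<close> wv unfolding subst_word_def by simp
      next
        case False
        have "v p = Some (w1 p)" unfolding v_def using False \<open>p \<in> ?I\<close> by simp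
        thus ?thesis using \<open>p \<in> ?I\<close> outX[OF False] unfolding subst_word_def by simp
      qed
    next
      case False
      have "w2 p = undefined" by (rule PiE_arb[OF w2P False])
      thus ?thesis unfolding subst_word_def using False by simp
    qed
  qed
  show ?thesis using pv s1 s2 unfolding w1_def w2_def by blast
qed


lemma slice_bound:
  assumes k: "Suc k * m \<le> n" and noline: "\<not> contains_poly_line n A"
  shows "real (card (A \<inter> Tk n m k)) \<le> Delta_circ m * real (card (Tk n m k))"
proof -
  let ?I = "grid n" and ?D = "Db m k" and ?F = "\<lambda>_::nat\<times>nat. {1,2::nat}"
  let ?Q = "\<lambda>b. \<forall>l<k. \<not> symk m l b"
  let ?S = "{a \<in> PiE (?I \<inter> ?D) ?F. symk m k a}"
  have fin: "finite ?I" "\<And>i. i \<in> ?I \<Longrightarrow> finite (?F i)" by (auto simp: finite_grid)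
  have DI: "?D \<subseteq> ?I" by (rule Db_sub[OF k])
  have bij: "bij_betw (grk m k) ?S (graphs_on m)" by (rule grk_bij[OF DI])
  have cS: "card ?S = card (graphs_on m)" using bij by (rule bij_betw_same_card)
  have gpos: "card (graphs_on m) > 0"
  proof -
    have "finite (graphs_on m)" "{} \<in> graphs_on m" unfolding graphs_on_def binom_le2_def by auto
    thus ?thesis by (auto simp: card_gt_0_iff)
  qed
  have "real (card (A \<inter> Tk n m k)) \<le> Delta_circ m *
      card {w \<in> PiE ?I ?F. symk m k (restrict w (?I \<inter> ?D)) \<and> ?Q (restrict w (?I - ?D))}"
  proof (rule card_fiber_bound[OF fin])
    show "A \<inter> Tk n m k \<subseteq> {w \<in> PiE ?I ?F. symk m k (restrict w (?I \<inter> ?D)) \<and> ?Q (restrict w (?I - ?D))}"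
      using Tk_split[OF k] by auto
    fix b assume b: "b \<in> PiE (?I - ?D) ?F" and Qb: "?Q b"
    define \<A> where "\<A> = {a \<in> PiE (?I \<inter> ?D) ?F. symk m k a \<and> mrg ?D a b \<in> A \<inter> Tk n m k}"
    have AS: "\<A> \<subseteq> ?S" unfolding \<A>_def by auto
    have inj: "inj_on (grk m k) \<A>" using bij AS unfolding bij_betw_def by (blast intro: inj_on_subset)
    have img: "grk m k ` \<A> \<subseteq> graphs_on m" using grk_graphs by blast
    have code: "HJ_code (grk m k ` \<A>)"
    proof (rule HJ_codeI[OF img])
      fix G1 G2 X assume G1: "G1 \<in> grk m k ` \<A>" and G2: "G2 \<in> grk m k ` \<A>" and sub: "G2 \<subseteq> G1"
        and X: "X \<noteq> {}" "X \<subseteq> {1..m}" "G1 - G2 = binom_le2 X"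
      obtain a1 where a1: "a1 \<in> \<A>" "G1 = grk m k a1" using G1 by auto
      obtain a2 where a2: "a2 \<in> \<A>" "G2 = grk m k a2" using G2 by auto
      have a1P: "a1 \<in> PiE (?I \<inter> ?D) ?F" "symk m k a1" "mrg ?D a1 b \<in> A" using a1(1) unfolding \<A>_def by auto
      have a2P: "a2 \<in> PiE (?I \<inter> ?D) ?F" "symk m k a2" "mrg ?D a2 b \<in> A" using a2(1) unfolding \<A>_def by auto
      obtain v where v: "poly_var_word n v" "subst_word n v 1 = mrg ?D a1 b" "subst_word n v 2 = mrg ?D a2 b"
        using block_line[OF k a1P(1,2) a2P(1,2) b, of X] sub X a1(2) a2(2) by auto
      have "contains_poly_line n A" unfolding contains_poly_line_def using v a1P(3) a2P(3) by auto
      thus False using noline by simp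
    qed
    have "Pgraph m (grk m k ` \<A>) \<le> Delta_circ m" by (rule Delta_facts(2)[OF img code])
    hence "real (card (grk m k ` \<A>)) \<le> Delta_circ m * real (card (graphs_on m))"
      unfolding Pgraph_def using gpos by (simp add: field_simps)
    hence "real (card \<A>) \<le> Delta_circ m * real (card ?S)" using card_image[OF inj] cS by simp
    thus "real (card {a \<in> PiE (?I \<inter> ?D) ?F. symk m k a \<and> mrg ?D a b \<in> A \<inter> Tk n m k})
        \<le> Delta_circ m * real (card ?S)" unfolding \<A>_def .
  qed
  thus ?thesis using Tk_split[OF k] by simp
qed

lemma count_induct:
  assumes noline: "\<not> contains_poly_line n A" and AW: "A \<subseteq> W22 n" and t: "t * m \<le> n" and kt: "k \<le> t"
  shows "real (card A) \<le> Delta_circ m * (2 ^ (n^2) - real (card (Nk n m k))) + real (card (A \<inter> Nk n m k))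
       \<and> real (card (Nk n m k)) \<le> (1 - 1 / 2 ^ (m*m)) ^ k * 2 ^ (n^2)"
  using kt
proof (induction k)
  case 0
  have "Nk n m 0 = W22 n" unfolding Nk_def by simp
  thus ?case using AW card_W22[of n] by (simp add: Int_absorb2)
next
  case (Suc k)
  hence IH: "real (card A) \<le> Delta_circ m * (2 ^ (n^2) - real (card (Nk n m k))) + real (card (A \<inter> Nk n m k))"
    "real (card (Nk n m k)) \<le> (1 - 1 / 2 ^ (m*m)) ^ k * 2 ^ (n^2)" by auto
  have "Suc k * m \<le> t * m" using Suc.prems by (rule mult_le_mono1)
  hence k: "Suc k * m \<le> n" using t by (rule le_trans)
  have finN: "finite (Nk n m k)" unfolding Nk_def using finite_W22 by simp
  have finT: "finite (Tk n m k)" by (rule finite_subset[OF Tk_sub finN])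
  have cN: "card (Nk n m k) = card (Tk n m k) + card (Nk n m (Suc k))"
    unfolding Nk_Suc using card_Diff_subset[OF finT Tk_sub] card_mono[OF finN Tk_sub] by simp
  have eqA: "A \<inter> Nk n m k = (A \<inter> Tk n m k) \<union> (A \<inter> Nk n m (Suc k))"
    unfolding Nk_Suc using Tk_sub by auto
  have cA: "card (A \<inter> Nk n m k) = card (A \<inter> Tk n m k) + card (A \<inter> Nk n m (Suc k))"
    unfolding eqA by (rule card_Un_disjoint) (use finN finT in \<open>auto simp: Nk_Suc\<close>)
  have sb: "real (card (A \<inter> Tk n m k)) \<le> Delta_circ m * real (card (Tk n m k))"
    by (rule slice_bound[OF k noline])
  have part1: "real (card A) \<le> Delta_circ m * (2 ^ (n^2) - real (card (Nk n m (Suc k)))) + real (card (A \<inter> Nk n m (Suc k)))"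
    using IH(1) sb cA cN by (simp add: algebra_simps)
  have ct: "real (card (Nk n m k)) \<le> 2 ^ (m*m) * real (card (Tk n m k))" by (rule card_Tk_Nk[OF k])
  have q: "(0::real) < 2 ^ (m*m)" by simp
  have "real (card (Nk n m (Suc k))) = real (card (Nk n m k)) - real (card (Tk n m k))" using cN by simp
  also have "\<dots> \<le> (1 - 1 / 2 ^ (m*m)) * real (card (Nk n m k))"
    using ct q by (simp add: field_simps)
  also have "\<dots> \<le> (1 - 1 / 2 ^ (m*m)) * ((1 - 1 / 2 ^ (m*m)) ^ k * 2 ^ (n^2))"
  proof (rule mult_left_mono[OF IH(2)])
    have "(1::real) \<le> 2 ^ (m*m)" by simp
    thus "0 \<le> 1 - 1 / (2::real) ^ (m*m)" by (simp add: field_simps)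
  qed
  also have "\<dots> = (1 - 1 / 2 ^ (m*m)) ^ Suc k * 2 ^ (n^2)" by simp
  finally show ?case using part1 by simp
qed


lemma dir2:
  assumes lim: "Delta_circ \<longlonglongrightarrow> 0"
  shows "\<forall>\<delta>::real. 0 < \<delta> \<and> \<delta> \<le> 1 \<longrightarrow>
            (\<exists>N::nat. N > 0 \<and> (\<forall>n\<ge>N. \<forall>A. A \<subseteq> W22 n \<and> real (card A) \<ge> \<delta> * 2 ^ (n ^ 2)
                 \<longrightarrow> contains_poly_line n A))"
proof (intro allI impI)
  fix \<delta> :: real assume d: "0 < \<delta> \<and> \<delta> \<le> 1"
  hence d2: "\<delta> / 2 > 0" by simp
  obtain M where M: "\<forall>m\<ge>M. norm (Delta_circ m - 0) < \<delta> / 2" using LIMSEQ_D[OF lim d2] by blast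
  define m where "m = M"
  have dm: "Delta_circ m < \<delta> / 2" using M unfolding m_def by auto
  define x :: real where "x = 1 - 1 / 2 ^ (m*m)"
  have x0: "0 \<le> x" unfolding x_def by (simp add: field_simps)
  have x1: "x < 1" unfolding x_def by simp
  have "(\<lambda>t. x ^ t) \<longlonglongrightarrow> 0" by (rule LIMSEQ_power_zero) (use x0 x1 in simp)
  then obtain T where T: "\<forall>t\<ge>T. norm (x ^ t - 0) < \<delta> / 2" using LIMSEQ_D[OF _ d2] by blast
  define t where "t = T"
  have xt: "x ^ t < \<delta> / 2" using T unfolding t_def by auto
  show "\<exists>N::nat. N > 0 \<and> (\<forall>n\<ge>N. \<forall>A. A \<subseteq> W22 n \<and> real (card A) \<ge> \<delta> * 2 ^ (n ^ 2)
                 \<longrightarrow> contains_poly_line n A)"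
  proof (intro exI conjI allI impI)
    show "Suc (t * m) > 0" by simp
    fix n A assume n: "Suc (t * m) \<le> n" and A: "A \<subseteq> W22 n \<and> real (card A) \<ge> \<delta> * 2 ^ (n ^ 2)"
    show "contains_poly_line n A"
    proof (rule ccontr)
      assume noline: "\<not> contains_poly_line n A"
      have tm: "t * m \<le> n" using n by simp
      have c: "real (card A) \<le> Delta_circ m * (2 ^ (n^2) - real (card (Nk n m t))) + real (card (A \<inter> Nk n m t))"
        and cN: "real (card (Nk n m t)) \<le> x ^ t * 2 ^ (n^2)"
        using count_induct[OF noline _ tm le_refl] A unfolding x_def by auto
      have finN: "finite (Nk n m t)" unfolding Nk_def using finite_W22 by simp
      have "card (A \<inter> Nk n m t) \<le> card (Nk n m t)" by (rule card_mono[OF finN]) auto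
      hence c2: "real (card (A \<inter> Nk n m t)) \<le> x ^ t * 2 ^ (n^2)" using cN by linarith
      have d0: "Delta_circ m \<ge> 0" by (rule Delta_facts(3))
      have "Delta_circ m * (2 ^ (n^2) - real (card (Nk n m t))) \<le> Delta_circ m * 2 ^ (n^2)"
        using d0 by (simp add: mult_left_mono)
      hence "real (card A) \<le> Delta_circ m * 2 ^ (n^2) + x ^ t * 2 ^ (n^2)" using c c2 by linarith
      also have "\<dots> < \<delta> / 2 * 2 ^ (n^2) + \<delta> / 2 * 2 ^ (n^2)"
        using dm xt by (intro add_strict_mono mult_strict_right_mono) auto
      also have "\<dots> = \<delta> * 2 ^ (n^2)" by simp
      finally show False using A by simp
    qed
  qed
qed

theorem propositionA1:
  shows "(\<forall>\<delta>::real. 0 < \<delta> \<and> \<delta> \<le> 1 \<longrightarrow>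
            (\<exists>N::nat. N > 0 \<and> (\<forall>n\<ge>N. \<forall>A. A \<subseteq> W22 n \<and> real (card A) \<ge> \<delta> * 2 ^ (n ^ 2)
                 \<longrightarrow> contains_poly_line n A)))
         \<longleftrightarrow> (Delta_circ \<longlonglongrightarrow> 0)"
  using dir1 dir2 by blast

end
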